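(* Assume $|V|\ge2$ and that there is $\kappa_0>0$ with $\overline\kappa(x,y)\ge\kappa_0$ for all $x,y\in V$, $x\ne y$. Then $\mathrm{diam}(H)\le 2/\kappa_0$.
   Context: Let $H=(V,E,w)$ be a weighted hypergraph: $V$ is a finite set, $E$ a set of nonempty subsets of $V$, $w\colon E\to\mathbb{R}_{>0}$. Write $x\sim y$ if some $e\in E$ contains both; $H$ is assumed connected. The degree is $d_x=\sum_{e\ni x}w_e>0$, $D=\mathrm{diag}(d_x)$. The distance $d(x,y)$ is the minimal $n$ with a chain $x=z_0\sim\cdots\sim z_n=y$, and $\mathrm{diam}(H)=\max_{x,y}d(x,y)$. $\delta_x$ is the indicator of $x$. $\mathbb{R}^V$ carries the inner product $\langle f,g\rangle=\sum_x f(x)g(x)/d_x$ with norm $\|\cdot\|$. For $e\in E$ let $B_e=\mathrm{Conv}\{\delta_x-\delta_y : x,y\in e\}$. The multivalued hypergraph Laplacian is $L(f)=\{\sum_{e}w_e\mathtt{b}_e(\mathtt{b}_e^\top f) : \mathtt{b}_e\in\operatorname{argmax}_{\mathtt b\in B_e}\mathtt b^\top f\}$ and the normalized Laplacian is $\mathcal{L}f=L(D^{-1}f)$, a maximal monotone operator on $(\mathbb{R}^V,\langle\cdot,\cdot\rangle)$. For $\lambda>0$ the resolvent $J_\lambda=(I+\lambda\mathcal L)^{-1}$ is a single-valued map $\mathbb{R}^V\to\mathbb{R}^V$ (equivalently $J_\lambda f=\operatorname{argmin}_g\{\frac{1}{2\lambda}\|f-g\|^2+Q(D^{-1}g)\}$,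 $Q(g)=\frac12\sum_e w_e\max_{x,y\in e}(g(x)-g(y))^2$). A function $f$ is weighted $1$-Lipschitz if $|f(x)/d_x-f(y)/d_y|\le d(x,y)$ for all $x,y$; $\mathrm{Lip}^1_w(V)$ denotes the set of such functions. $\mathrm{KD}_\lambda(x,y)=\sup\{\langle J_\lambda f,\delta_x-\delta_y\rangle : f\in\mathrm{Lip}^1_w(V)\}$. For $x\ne y$: $\kappa_\lambda(x,y)=1-\mathrm{KD}_\lambda(x,y)/d(x,y)$ and $\overline\kappa(x,y)=\limsup_{\lambda\downarrow0}\kappa_\lambda(x,y)/\lambda$. *)

theory Defs
  imports "HOL-Analysis.Analysis"
begin

text \<open>Weighted hypergraph on a finite vertex type 'a (V = UNIV), edges E, weights w.
  Functions on V are vectors in real^'a; the indicator of x is axis x 1.\<close>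

definition hadj :: "'a set set \<Rightarrow> 'a \<Rightarrow> 'a \<Rightarrow> bool" where
  "hadj E x y \<longleftrightarrow> (\<exists>e\<in>E. x \<in> e \<and> y \<in> e)"

definition hchain :: "'a set set \<Rightarrow> 'a \<Rightarrow> 'a \<Rightarrow> nat \<Rightarrow> bool" where
  "hchain E x y n \<longleftrightarrow> (\<exists>p::nat \<Rightarrow> 'a. p 0 = x \<and> p n = y \<and> (\<forall>i<n. hadj E (p i) (p (Suc i))))"

definition hconnected :: "'a set set \<Rightarrow> bool" where
  "hconnected E \<longleftrightarrow> (\<forall>x y. \<exists>n. hchain E x y n)"

definition hdist :: "'a set set \<Rightarrow> 'a \<Rightarrow> 'a \<Rightarrow> nat" where
  "hdist E x y = (LEAST n. hchain E x y n)"

definition hdiam :: "('a::finite) set set \<Rightarrow> nat" where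
  "hdiam E = Max {hdist E x y | x y. True}"

definition hdeg :: "'a set set \<Rightarrow> ('a set \<Rightarrow> real) \<Rightarrow> 'a \<Rightarrow> real" where
  "hdeg E w x = (\<Sum>e\<in>{e\<in>E. x \<in> e}. w e)"

definition Bset :: "('a::finite) set \<Rightarrow> (real^'a) set" where
  "Bset e = convex hull {axis x 1 - axis y 1 | x y. x \<in> e \<and> y \<in> e}"

definition hLap :: "('a::finite) set set \<Rightarrow> ('a set \<Rightarrow> real) \<Rightarrow> real^'a \<Rightarrow> (real^'a) set" where
  "hLap E w f = {(\<Sum>e\<in>E. (w e * (b e \<bullet> f)) *\<^sub>R b e) | b.
      \<forall>e\<in>E. b e \<in> Bset e \<and> (\<forall>c\<in>Bset e. c \<bullet> f \<le> b e \<bullet> f)}"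

definition nLap :: "('a::finite) set set \<Rightarrow> ('a set \<Rightarrow> real) \<Rightarrow> real^'a \<Rightarrow> (real^'a) set" where
  "nLap E w f = hLap E w (\<chi> x. f $ x / hdeg E w x)"

text \<open>Resolvent J_lambda = (I + lambda nLap)^{-1}: J f is the g with f \<in> g + lambda nLap g.\<close>
definition resolv :: "('a::finite) set set \<Rightarrow> ('a set \<Rightarrow> real) \<Rightarrow> real \<Rightarrow> real^'a \<Rightarrow> real^'a" where
  "resolv E w lam f = (THE g. (1 / lam) *\<^sub>R (f - g) \<in> nLap E w g)"

definition winner :: "('a::finite) set set \<Rightarrow> ('a set \<Rightarrow> real) \<Rightarrow> real^'a \<Rightarrow> real^'a \<Rightarrow> real" where
  "winner E w f g = (\<Sum>x\<in>UNIV. f $ x * g $ x / hdeg E w x)"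

definition wLip1 :: "('a::finite) set set \<Rightarrow> ('a set \<Rightarrow> real) \<Rightarrow> real^'a \<Rightarrow> bool" where
  "wLip1 E w f \<longleftrightarrow> (\<forall>x y. \<bar>f $ x / hdeg E w x - f $ y / hdeg E w y\<bar> \<le> real (hdist E x y))"

definition KD :: "('a::finite) set set \<Rightarrow> ('a set \<Rightarrow> real) \<Rightarrow> real \<Rightarrow> 'a \<Rightarrow> 'a \<Rightarrow> real" where
  "KD E w lam x y = Sup ((\<lambda>f. winner E w (resolv E w lam f) (axis x 1 - axis y 1)) ` {f. wLip1 E w f})"

definition kappa :: "('a::finite) set set \<Rightarrow> ('a set \<Rightarrow> real) \<Rightarrow> real \<Rightarrow> 'a \<Rightarrow> 'a \<Rightarrow> real" where
  "kappa E w lam x y = 1 - KD E w lam x y / real (hdist E x y)"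

definition kappa_bar :: "('a::finite) set set \<Rightarrow> ('a set \<Rightarrow> real) \<Rightarrow> 'a \<Rightarrow> 'a \<Rightarrow> ereal" where
  "kappa_bar E w x y = Limsup (at_right 0) (\<lambda>lam. ereal (kappa E w lam x y / lam))"

end

theory Submission
  imports Defs
begin


lemma hchain_refl: "hchain E x x 0"
  unfolding hchain_def by (rule exI[of _ "\<lambda>_. x"]) simp

lemma hchain_edge: "e \<in> E \<Longrightarrow> x \<in> e \<Longrightarrow> y \<in> e \<Longrightarrow> hchain E x y 1"
  unfolding hchain_def hadj_def
  by (rule exI[of _ "\<lambda>i. if i = 0 then x else y"]) auto

lemma hchain_trans:
  assumes "hchain E x y n" "hchain E y z m" shows "hchain E x z (n + m)"
proof -
  obtain p where p: "p 0 = x" "p n = y" "\<forall>i<n. hadj E (p i) (p (Suc i))"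
    using assms(1) unfolding hchain_def by blast
  obtain q where q: "q 0 = y" "q m = z" "\<forall>i<m. hadj E (q i) (q (Suc i))"
    using assms(2) unfolding hchain_def by blast
  define r where "r i = (if i \<le> n then p i else q (i - n))" for i
  have "\<forall>i<n+m. hadj E (r i) (r (Suc i))"
  proof (intro allI impI)
    fix i assume i: "i < n + m"
    show "hadj E (r i) (r (Suc i))"
    proof (cases "i < n")
      case True then show ?thesis using p(3) by (auto simp: r_def)
    next
      case False
      then have "i - n < m" "Suc i - n = Suc (i - n)" using i by auto
      then show ?thesis using q(3) False p(2) q(1) by (auto simp: r_def)
    qed
  qed
  moreover have "r 0 = x" "r (n+m) = z" using p q by (auto simp: r_def)
  ultimately show ?thesis unfolding hchain_def by blast
qed

lemma hchain_sym:
  assumes "hchain E x y n" shows "hchain E y x n"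
proof -
  obtain p where p: "p 0 = x" "p n = y" "\<forall>i<n. hadj E (p i) (p (Suc i))"
    using assms(1) unfolding hchain_def by blast
  define r where "r i = p (n - i)" for i
  have "\<forall>i<n. hadj E (r i) (r (Suc i))"
  proof (intro allI impI)
    fix i assume i: "i < n"
    then have "n - i = Suc (n - Suc i)" by auto
    then show "hadj E (r i) (r (Suc i))" using p(3)[rule_format, of "n - Suc i"] i
      unfolding r_def hadj_def by auto
  qed
  then show ?thesis unfolding hchain_def by (intro exI[of _ r]) (auto simp: r_def p)
qed

lemma hdist_chain: "hconnected E \<Longrightarrow> hchain E x y (hdist E x y)"
  unfolding hdist_def hconnected_def by (meson LeastI_ex)

lemma hdist_le: "hchain E x y n \<Longrightarrow> hdist E x y \<le> n"
  unfolding hdist_def by (rule Least_le)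

lemma hdist_refl[simp]: "hdist E x x = 0"
  using hdist_le[OF hchain_refl] by simp

lemma hdist_edge: "e \<in> E \<Longrightarrow> x \<in> e \<Longrightarrow> y \<in> e \<Longrightarrow> hdist E x y \<le> 1"
  by (rule hdist_le[OF hchain_edge])

lemma hdist_sym: "hconnected E \<Longrightarrow> hdist E x y = hdist E y x"
  by (meson antisym hchain_sym hdist_chain hdist_le)

lemma hdist_tri: "hconnected E \<Longrightarrow> hdist E x z \<le> hdist E x y + hdist E y z"
  by (meson hchain_trans hdist_chain hdist_le)

lemma Bset_le:
  fixes h :: "real^'a::finite"
  assumes "b \<in> Bset e" "\<forall>a\<in>e. \<forall>c\<in>e. h$a - h$c \<le> M"
  shows "b \<bullet> h \<le> M"
proof -
  have "{axis x 1 - axis y 1 | x y. x \<in> e \<and> y \<in> e} \<subseteq> {b. b \<bullet> h \<le> M}"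
    using assms(2) by (auto simp: inner_diff_left inner_axis' )
  then have "Bset e \<subseteq> {b. b \<bullet> h \<le> M}"
    unfolding Bset_def using convex_halfspace_le[of h M]
    by (intro hull_minimal) (auto simp: inner_commute)
  then show ?thesis using assms(1) by auto
qed

lemma Bset_zero: "e \<noteq> {} \<Longrightarrow> (0::real^'a::finite) \<in> Bset e"
  unfolding Bset_def by (rule hull_inc) auto

lemma Bset_comp:
  fixes b :: "real^'a::finite"
  assumes "b \<in> Bset e" shows "\<bar>b$z\<bar> \<le> (if z \<in> e then 1 else 0)"
proof -
  let ?C = "{b::real^'a. \<bar>b$z\<bar> \<le> (if z \<in> e then 1 else 0)}"
  have cv: "convex ?C"
    unfolding convex_def
  proof (intro ballI allI impI)
    fix x y :: "real^'a" and u v :: real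
    assume x: "x \<in> ?C" and y: "y \<in> ?C" and uv: "0 \<le> u" "0 \<le> v" "u + v = 1"
    have "\<bar>u * x$z + v * y$z\<bar> \<le> u * \<bar>x$z\<bar> + v * \<bar>y$z\<bar>"
      using uv by (metis abs_mult abs_of_nonneg abs_triangle_ineq)
    also have "\<dots> \<le> u * (if z \<in> e then 1 else 0) + v * (if z \<in> e then 1 else 0)"
      using x y uv by (intro add_mono mult_left_mono) auto
    also have "\<dots> = (if z \<in> e then 1 else 0)" using uv by (simp add: distrib_right[symmetric])
    finally show "u *\<^sub>R x + v *\<^sub>R y \<in> ?C" by simp
  qed
  have "{axis x 1 - axis y 1 | x y. x \<in> e \<and> y \<in> e} \<subseteq> ?C"
    by (auto simp: axis_def)
  then have "Bset e \<subseteq> ?C" unfolding Bset_def by (intro hull_minimal cv)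
  then show ?thesis using assms by auto
qed



definition osc :: "'a set \<Rightarrow> real^'a::finite \<Rightarrow> real" where
  "osc e h = Max ((\<lambda>(a,c). h$a - h$c) ` (e \<times> e))"

lemma osc_ge: "a \<in> e \<Longrightarrow> c \<in> e \<Longrightarrow> h$a - h$c \<le> osc e h"
  unfolding osc_def by (rule Max_ge) force+

lemma osc_le: "e \<noteq> {} \<Longrightarrow> (\<And>a c. a \<in> e \<Longrightarrow> c \<in> e \<Longrightarrow> h$a - h$c \<le> M) \<Longrightarrow> osc e h \<le> M"
  unfolding osc_def by (subst Max_le_iff) auto

lemma osc_nonneg: "e \<noteq> {} \<Longrightarrow> 0 \<le> osc e h"
  using osc_ge[of _ e _ h] by fastforce

lemma osc_attain: "e \<noteq> {} \<Longrightarrow> \<exists>a\<in>e. \<exists>c\<in>e. h$a - h$c = osc e h"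
proof -
  assume "e \<noteq> {}"
  then have "osc e h \<in> (\<lambda>(a,c). h$a - h$c) ` (e \<times> e)"
    unfolding osc_def by (intro Max_in) auto
  then show ?thesis by force
qed

lemma Bset_osc: "b \<in> Bset e \<Longrightarrow> b \<bullet> h \<le> osc e h"
  by (rule Bset_le) (auto intro: osc_ge)

lemma continuous_Max_fin:
  fixes F :: "'s \<Rightarrow> 'b::topological_space \<Rightarrow> real"
  assumes "finite S" "S \<noteq> {}" "\<And>s. s \<in> S \<Longrightarrow> continuous_on UNIV (F s)"
  shows "continuous_on UNIV (\<lambda>x. Max ((\<lambda>s. F s x) ` S))"
  using assms
proof (induction S rule: finite_ne_induct)
  case (singleton s) then show ?case by simp
next
  case (insert s S)
  have "(\<lambda>x. Max ((\<lambda>s. F s x) ` insert s S)) = (\<lambda>x. max (F s x) (Max ((\<lambda>s. F s x) ` S)))"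
    using insert by (auto simp: Max_insert)
  then show ?case using insert by (auto intro!: continuous_on_max)
qed

lemma osc_cont: "e \<noteq> {} \<Longrightarrow> continuous_on UNIV (osc e)"
proof -
  assume e: "e \<noteq> {}"
  have eq: "osc e = (\<lambda>h. Max ((\<lambda>s. (\<lambda>h::real^'a. h$fst s - h$snd s) h) ` (e \<times> e)))"
    unfolding osc_def by (auto simp: case_prod_beta intro!: ext)
  have "continuous_on UNIV (\<lambda>h. Max ((\<lambda>s. (\<lambda>h::real^'a. h$fst s - h$snd s) h) ` (e \<times> e)))"
    using e by (intro continuous_Max_fin) (auto intro!: continuous_intros)
  then show ?thesis by (simp only: eq)
qed

lemma minimizer_exists:
  fixes f :: "real^'a::finite" and d :: "'a \<Rightarrow> real" and E :: "'a set set"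
  assumes ne: "\<forall>e\<in>E. e \<noteq> {}" and wpos: "\<forall>e\<in>E. w e > 0" and dpos: "\<forall>x. d x > 0" and lam: "lam > 0"
  defines "\<Phi> \<equiv> \<lambda>h::real^'a. (\<Sum>z\<in>UNIV. (f$z - d z * h$z)^2 / (2 * d z)) + lam * (\<Sum>e\<in>E. w e * (osc e h)^2 / 2)"
  shows "\<exists>h0. \<forall>h. \<Phi> h0 \<le> \<Phi> h"
proof -
  have cont: "continuous_on UNIV \<Phi>"
    unfolding \<Phi>_def using ne dpos
    by (intro continuous_intros continuous_on_compose2[OF osc_cont, of _ UNIV "\<lambda>x. x"]) (auto, metis less_irrefl)
  define S where "S = {h. \<Phi> h \<le> \<Phi> 0}"
  have cl: "closed S" unfolding S_def by (rule closed_Collect_le[OF cont]) simp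
  define B where "B z = (\<bar>f$z\<bar> + sqrt (2 * d z * \<Phi> 0)) / d z" for z
  have bd: "norm h \<le> (\<Sum>z\<in>UNIV. B z)" if "h \<in> S" for h
  proof -
    have hS: "\<Phi> h \<le> \<Phi> 0" using that by (simp add: S_def)
    have nn2: "0 \<le> lam * (\<Sum>e\<in>E. w e * (osc e h)^2 / 2)"
      using lam wpos by (intro mult_nonneg_nonneg sum_nonneg) (auto intro: less_imp_le)
    have "\<bar>h$z\<bar> \<le> B z" for z
    proof -
      have "(f$z - d z * h$z)^2 / (2 * d z) \<le> (\<Sum>z\<in>UNIV. (f$z - d z * h$z)^2 / (2 * d z))"
        using dpos by (intro member_le_sum) (auto intro: divide_nonneg_pos)
      also have "\<dots> \<le> \<Phi> 0" using hS nn2 unfolding \<Phi>_def by linarith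
      finally have "(f$z - d z * h$z)^2 \<le> 2 * d z * \<Phi> 0"
        using dpos[rule_format, of z] by (simp add: field_simps)
      then have "\<bar>f$z - d z * h$z\<bar> \<le> sqrt (2 * d z * \<Phi> 0)"
        using real_sqrt_le_mono by fastforce
      then have "d z * \<bar>h$z\<bar> \<le> \<bar>f$z\<bar> + sqrt (2 * d z * \<Phi> 0)"
        using dpos[rule_format, of z] by (simp add: abs_mult)
      then show ?thesis unfolding B_def using dpos[rule_format, of z]
        by (simp add: le_divide_eq mult.commute)
    qed
    then show ?thesis using norm_le_l1_cart[of h] by (meson order_trans sum_mono)
  qed
  have "bounded S" unfolding bounded_iff using bd by blast
  then have cpt: "compact S" using cl by (simp add: compact_eq_bounded_closed)
  have "0 \<in> S" by (simp add: S_def)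
  then obtain h0 where h0: "h0 \<in> S" "\<forall>y\<in>S. \<Phi> h0 \<le> \<Phi> y"
    using continuous_attains_inf[OF cpt _ continuous_on_subset[OF cont]] by blast
  have "\<Phi> h0 \<le> \<Phi> h" for h
  proof (cases "h \<in> S")
    case True then show ?thesis using h0 by auto
  next
    case False then have "\<Phi> h > \<Phi> 0" by (auto simp: S_def)
    moreover have "\<Phi> h0 \<le> \<Phi> 0" using h0 \<open>0 \<in> S\<close> by auto
    ultimately show ?thesis by auto
  qed
  then show ?thesis by blast
qed



lemma kkt:
  fixes f :: "real^'a::finite" and d :: "'a \<Rightarrow> real" and E :: "'a set set" and h0 :: "real^'a"
  assumes ne: "\<forall>e\<in>E. e \<noteq> {}" and wpos: "\<forall>e\<in>E. w e > 0" and dpos: "\<forall>x. d x > 0" and lam: "lam > 0"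
  defines "\<Phi> \<equiv> \<lambda>h::real^'a. (\<Sum>z\<in>UNIV. (f$z - d z * h$z)^2 / (2 * d z)) + lam * (\<Sum>e\<in>E. w e * (osc e h)^2 / 2)"
  defines "Act \<equiv> \<lambda>e. {axis a 1 - axis c 1 | a c. a \<in> e \<and> c \<in> e \<and> h0$a - h0$c = osc e h0}"
  assumes min: "\<forall>h. \<Phi> h0 \<le> \<Phi> h"
  shows "\<exists>b. f - (\<chi> z. d z * h0$z) = (\<Sum>e\<in>E. (lam * w e * osc e h0) *\<^sub>R b e)
              \<and> (\<forall>e\<in>E. b e \<in> convex hull (Act e))"
proof -
  define m where "m e = osc e h0" for e
  define grad where "grad = - (f - (\<chi> z. d z * h0$z))"
  define p where "p c = grad + (\<Sum>e\<in>E. (lam * w e * m e) *\<^sub>R c e)" for c :: "'a set \<Rightarrow> real^'a"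
  have finAct: "finite (Act e)" for e
  proof -
    have "Act e \<subseteq> (\<lambda>(a,c). axis a 1 - axis c 1) ` (UNIV \<times> UNIV)" unfolding Act_def by auto
    then show ?thesis by (rule finite_subset) simp
  qed
  have neAct: "Act e \<noteq> {}" if "e \<in> E" for e
    using osc_attain[of e h0] ne that unfolding Act_def by fastforce
  define P where "P = p ` (PiE E Act)"
  have finP: "finite P" unfolding P_def by (intro finite_imageI finite_PiE) (auto simp: finAct)
  define K where "K = {p b | b. \<forall>e\<in>E. b e \<in> convex hull (Act e)}"
  have PK: "P \<subseteq> K" unfolding P_def K_def by (auto intro: hull_inc)
  have cK: "convex K" unfolding convex_def
  proof (intro ballI allI impI)
    fix x y u v :: real
    fix x y :: "real^'a" and u v :: real
    assume "x \<in> K" "y \<in> K" and uv: "0 \<le> u" "0 \<le> v" "u + v = 1"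
    then obtain b1 b2 where b1: "x = p b1" "\<forall>e\<in>E. b1 e \<in> convex hull (Act e)"
      and b2: "y = p b2" "\<forall>e\<in>E. b2 e \<in> convex hull (Act e)" unfolding K_def by blast
    define b where "b e = u *\<^sub>R b1 e + v *\<^sub>R b2 e" for e
    have "\<forall>e\<in>E. b e \<in> convex hull (Act e)"
      using b1 b2 uv unfolding b_def by (auto intro: convexD[OF convex_convex_hull])
    moreover have "u *\<^sub>R x + v *\<^sub>R y = p b"
    proof -
      have "u *\<^sub>R x + v *\<^sub>R y = (u + v) *\<^sub>R grad + (\<Sum>e\<in>E. (lam * w e * m e) *\<^sub>R (u *\<^sub>R b1 e + v *\<^sub>R b2 e))"
        unfolding b1 b2 p_def
        by (simp add: scaleR_add_right scaleR_add_left scaleR_sum_right sum.distrib algebra_simps)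
      then show ?thesis using uv unfolding p_def b_def by simp
    qed
    ultimately show "u *\<^sub>R x + v *\<^sub>R y \<in> K" unfolding K_def by blast
  qed
  have "convex hull P \<subseteq> K" using PK cK by (rule hull_minimal)
  have "0 \<in> convex hull P"
  proof (rule ccontr)
    assume n0: "0 \<notin> convex hull P"
    obtain a bb where ab: "0 < bb" "\<forall>x\<in>convex hull P. a \<bullet> x > bb"
      using separating_hyperplane_closed_0[OF convex_convex_hull
          compact_imp_closed[OF finite_imp_compact_convex_hull[OF finP]] n0] by blast
    define u where "u = - a"
    have exv: "\<exists>v. v \<in> Act e \<and> (\<forall>v'\<in>Act e. v' \<bullet> u \<le> v \<bullet> u)" if "e \<in> E" for e
    proof -
      let ?M = "Max ((\<lambda>v. v \<bullet> u) ` Act e)"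
      have "?M \<in> (\<lambda>v. v \<bullet> u) ` Act e" using finAct neAct[OF that] by (intro Max_in) auto
      then obtain v where "v \<in> Act e" "v \<bullet> u = ?M" by auto
      moreover have "\<forall>v'\<in>Act e. v' \<bullet> u \<le> ?M" using finAct by auto
      ultimately show ?thesis by auto
    qed
    define v where "v e = (if e \<in> E then (SOME v. v \<in> Act e \<and> (\<forall>v'\<in>Act e. v' \<bullet> u \<le> v \<bullet> u)) else undefined)" for e
    have v: "v e \<in> Act e" "\<forall>v'\<in>Act e. v' \<bullet> u \<le> v e \<bullet> u" if "e \<in> E" for e
      using someI_ex[OF exv[OF that]] that unfolding v_def by auto
    have "v \<in> PiE E Act" using v by (auto simp: v_def)
    then have "p v \<in> convex hull P" unfolding P_def by (auto intro: hull_inc)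
    then have "a \<bullet> p v > bb" using ab by auto
    define s where "s e = v e \<bullet> u" for e
    define \<alpha> where "\<alpha> = p v \<bullet> u"
    have \<alpha>neg: "\<alpha> < 0" using \<open>a \<bullet> p v > bb\<close> ab(1) unfolding \<alpha>_def u_def by (simp add: inner_commute)
    have \<alpha>eq: "\<alpha> = - (\<Sum>z\<in>UNIV. (f$z - d z * h0$z) * u$z) + lam * (\<Sum>e\<in>E. w e * m e * s e)"
    proof -
      have 1: "\<alpha> = grad \<bullet> u + (\<Sum>e\<in>E. (lam * w e * m e) * s e)"
        unfolding \<alpha>_def p_def s_def by (simp add: inner_add_left inner_sum_left)
      have 2: "grad \<bullet> u = - (\<Sum>z\<in>UNIV. (f$z - d z * h0$z) * u$z)"
        unfolding grad_def by (simp add: inner_minus_left inner_vec_def sum_negf[symmetric] algebra_simps)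
      show ?thesis unfolding 1 2 by (simp add: sum_distrib_left mult.assoc)
    qed
    define \<beta> where "\<beta> = (\<Sum>z\<in>UNIV. d z * (u$z)^2) / 2 + lam * (\<Sum>e\<in>E. w e * (s e)^2 / 2)"
    have ev1: "eventually (\<lambda>t. \<forall>e\<in>E. \<forall>ac\<in>e\<times>e. (h0 + t *\<^sub>R u)$(fst ac) - (h0 + t *\<^sub>R u)$(snd ac) \<le> m e + t * s e) (at_right 0)"
    proof (intro eventually_ball_finite ballI)
      show "finite E" by simp
      show "\<And>e. e \<in> E \<Longrightarrow> finite (e \<times> e)" by simp
      fix e ac assume e: "e \<in> E" and ac: "ac \<in> e \<times> e"
      obtain a c where acd: "ac = (a,c)" "a \<in> e" "c \<in> e" using ac by auto
      show "eventually (\<lambda>t. (h0 + t *\<^sub>R u)$(fst ac) - (h0 + t *\<^sub>R u)$(snd ac) \<le> m e + t * s e) (at_right 0)"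
      proof (cases "h0$a - h0$c = m e")
        case True
        then have "axis a 1 - axis c 1 \<in> Act e" using acd unfolding Act_def m_def by blast
        then have "(axis a 1 - axis c 1) \<bullet> u \<le> s e" using v(2)[OF e] unfolding s_def by blast
        then have q: "u$a - u$c \<le> s e" by (simp add: inner_diff_left inner_axis')
        show ?thesis using eventually_at_right_less[of 0]
        proof (rule eventually_mono)
          fix t :: real assume "0 < t"
          then have "t * (u$a - u$c) \<le> t * s e" using q by (intro mult_left_mono) auto
          then show "(h0 + t *\<^sub>R u)$(fst ac) - (h0 + t *\<^sub>R u)$(snd ac) \<le> m e + t * s e"
            using True acd by (simp add: algebra_simps)
        qed
      next
        case False
        then have lt: "h0$a - h0$c < m e" using osc_ge[OF acd(2,3), of h0] unfolding m_def by linarith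
        have "((\<lambda>t. (m e + t * s e) - (h0$a - h0$c + t * (u$a - u$c))) \<longlongrightarrow>
               (m e + 0 * s e) - (h0$a - h0$c + 0 * (u$a - u$c))) (at_right 0)"
          by (intro tendsto_intros)
        then have "eventually (\<lambda>t. 0 < (m e + t * s e) - (h0$a - h0$c + t * (u$a - u$c))) (at_right 0)"
          using lt by (intro order_tendstoD(1)) auto
        then show ?thesis
          by (rule eventually_mono) (simp add: acd algebra_simps)
      qed
    qed
    have ev2: "eventually (\<lambda>t. \<alpha> + t * \<beta> < 0) (at_right 0)"
    proof -
      have "((\<lambda>t. \<alpha> + t * \<beta>) \<longlongrightarrow> \<alpha> + 0 * \<beta>) (at_right 0)" by (intro tendsto_intros)
      then show ?thesis using \<alpha>neg by (intro order_tendstoD(2)) auto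
    qed
    obtain t where t: "0 < t" "\<alpha> + t * \<beta> < 0"
      and tt: "\<forall>e\<in>E. \<forall>ac\<in>e\<times>e. (h0 + t *\<^sub>R u)$(fst ac) - (h0 + t *\<^sub>R u)$(snd ac) \<le> m e + t * s e"
      using eventually_happens'[OF _ eventually_conj[OF eventually_at_right_less[of 0] eventually_conj[OF ev1 ev2]]]
      by auto
    let ?h = "h0 + t *\<^sub>R u"
    have osc_bd: "(osc e ?h)^2 \<le> (m e + t * s e)^2" if e: "e \<in> E" for e
    proof -
      have "osc e ?h \<le> m e + t * s e" using tt e ne by (intro osc_le) auto
      moreover have "0 \<le> osc e ?h" using ne e by (intro osc_nonneg) auto
      ultimately show ?thesis by (intro power_mono) auto
    qed
    have part1: "(\<Sum>z\<in>UNIV. (f$z - d z * ?h$z)^2 / (2 * d z)) =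
        (\<Sum>z\<in>UNIV. (f$z - d z * h0$z)^2 / (2 * d z)) - t * (\<Sum>z\<in>UNIV. (f$z - d z * h0$z) * u$z)
        + t^2 * ((\<Sum>z\<in>UNIV. d z * (u$z)^2) / 2)"
    proof -
      have "(f$z - d z * ?h$z)^2 / (2 * d z) = (f$z - d z * h0$z)^2 / (2 * d z) - t * ((f$z - d z * h0$z) * u$z)
           + t^2 * (d z * (u$z)^2) / 2" for z
        using dpos[rule_format, of z] by (simp add: field_simps power2_eq_square)
      then show ?thesis
        by (simp add: sum.distrib sum_subtractf sum_distrib_left sum_divide_distrib)
    qed
    have part2: "(\<Sum>e\<in>E. w e * (osc e ?h)^2 / 2) \<le>
        (\<Sum>e\<in>E. w e * (m e)^2 / 2) + t * (\<Sum>e\<in>E. w e * m e * s e) + t^2 * (\<Sum>e\<in>E. w e * (s e)^2 / 2)"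
    proof -
      have "(\<Sum>e\<in>E. w e * (osc e ?h)^2 / 2) \<le> (\<Sum>e\<in>E. w e * (m e + t * s e)^2 / 2)"
        using osc_bd wpos by (intro sum_mono divide_right_mono mult_left_mono) (auto intro: less_imp_le)
      also have "\<dots> = (\<Sum>e\<in>E. w e * (m e)^2 / 2 + t * (w e * m e * s e) + t^2 * (w e * (s e)^2 / 2))"
        by (intro sum.cong) (auto simp: power2_eq_square field_simps)
      also have "\<dots> = (\<Sum>e\<in>E. w e * (m e)^2 / 2) + t * (\<Sum>e\<in>E. w e * m e * s e) + t^2 * (\<Sum>e\<in>E. w e * (s e)^2 / 2)"
        by (simp add: sum.distrib sum_distrib_left)
      finally show ?thesis .
    qed
    have "\<Phi> ?h \<le> \<Phi> h0 + t * \<alpha> + t^2 * \<beta>"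
    proof -
      have "lam * (\<Sum>e\<in>E. w e * (osc e ?h)^2 / 2) \<le>
          lam * ((\<Sum>e\<in>E. w e * (m e)^2 / 2) + t * (\<Sum>e\<in>E. w e * m e * s e) + t^2 * (\<Sum>e\<in>E. w e * (s e)^2 / 2))"
        using part2 lam by (intro mult_left_mono) auto
      then show ?thesis unfolding \<Phi>_def part1 \<alpha>eq \<beta>_def m_def
        by (simp add: algebra_simps)
    qed
    also have "\<dots> < \<Phi> h0"
    proof -
      have "t * (\<alpha> + t * \<beta>) < 0" using t by (simp add: mult_pos_neg)
      then show ?thesis by (simp add: algebra_simps power2_eq_square)
    qed
    finally show False using min by (meson not_le)
  qed
  then have "0 \<in> K" using \<open>convex hull P \<subseteq> K\<close> by auto
  then obtain b where b: "0 = p b" "\<forall>e\<in>E. b e \<in> convex hull (Act e)" unfolding K_def by blast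
  have "f - (\<chi> z. d z * h0$z) = (\<Sum>e\<in>E. (lam * w e * m e) *\<^sub>R b e)"
    using b(1) unfolding p_def grad_def by (simp add: algebra_simps eq_neg_iff_add_eq_0)
  then show ?thesis using b(2) unfolding m_def by blast
qed



lemma nLap_mem:
  "v \<in> nLap E w g \<longleftrightarrow> (\<exists>b. v = (\<Sum>e\<in>E. (w e * (b e \<bullet> (\<chi> x. g$x / hdeg E w x))) *\<^sub>R b e) \<and>
      (\<forall>e\<in>E. b e \<in> Bset e \<and> (\<forall>c\<in>Bset e. c \<bullet> (\<chi> x. g$x / hdeg E w x) \<le> b e \<bullet> (\<chi> x. g$x / hdeg E w x))))"
  unfolding nLap_def hLap_def by auto

lemma resolv_exists:
  fixes E :: "('a::finite) set set" and f :: "real^'a"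
  assumes ne: "\<forall>e\<in>E. e \<noteq> {}" and wpos: "\<forall>e\<in>E. w e > 0" and dpos: "\<forall>x. hdeg E w x > 0" and lam: "lam > 0"
  shows "\<exists>g. (1/lam) *\<^sub>R (f - g) \<in> nLap E w g"
proof -
  let ?d = "hdeg E w"
  obtain h0 where min: "\<forall>h. (\<Sum>z\<in>UNIV. (f$z - ?d z * h0$z)^2 / (2 * ?d z)) + lam * (\<Sum>e\<in>E. w e * (osc e h0)^2 / 2)
     \<le> (\<Sum>z\<in>UNIV. (f$z - ?d z * h$z)^2 / (2 * ?d z)) + lam * (\<Sum>e\<in>E. w e * (osc e h)^2 / 2)"
    using minimizer_exists[OF ne wpos dpos lam, of f] by blast
  obtain b where b: "f - (\<chi> z. ?d z * h0$z) = (\<Sum>e\<in>E. (lam * w e * osc e h0) *\<^sub>R b e)"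
    "\<forall>e\<in>E. b e \<in> convex hull {axis a 1 - axis c 1 | a c. a \<in> e \<and> c \<in> e \<and> h0$a - h0$c = osc e h0}"
    using kkt[OF ne wpos dpos lam, of f h0] min by blast
  define g where "g = (\<chi> z. ?d z * h0$z)"
  have hg: "(\<chi> x. g$x / ?d x) = h0" unfolding g_def using dpos
    by (simp add: vec_eq_iff) (metis less_irrefl)
  have bB: "b e \<in> Bset e" and bh: "b e \<bullet> h0 = osc e h0" if e: "e \<in> E" for e
  proof -
    let ?A = "{axis a 1 - axis c 1 | a c. a \<in> e \<and> c \<in> e \<and> h0$a - h0$c = osc e h0}"
    have "convex hull ?A \<subseteq> Bset e" unfolding Bset_def by (rule hull_mono) blast
    then show "b e \<in> Bset e" using b(2) e by auto
    have "?A \<subseteq> {x. x \<bullet> h0 = osc e h0}" by (auto simp: inner_diff_left inner_axis')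
    then have "convex hull ?A \<subseteq> {x. x \<bullet> h0 = osc e h0}"
      using convex_hyperplane[of h0 "osc e h0"] by (intro hull_minimal) (auto simp: inner_commute)
    then show "b e \<bullet> h0 = osc e h0" using b(2) e by auto
  qed
  have "(1/lam) *\<^sub>R (f - g) = (\<Sum>e\<in>E. (w e * (b e \<bullet> h0)) *\<^sub>R b e)"
    unfolding g_def b(1) scaleR_sum_right using lam bh by (intro sum.cong) auto
  moreover have "\<forall>e\<in>E. b e \<in> Bset e \<and> (\<forall>c\<in>Bset e. c \<bullet> h0 \<le> b e \<bullet> h0)"
    using bB bh Bset_osc by auto
  ultimately have "(1/lam) *\<^sub>R (f - g) \<in> nLap E w g" unfolding nLap_mem hg by blast
  then show ?thesis by blast
qed

lemma hLap_mono:
  fixes E :: "('a::finite) set set"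
  assumes ne: "\<forall>e\<in>E. e \<noteq> {}" and wpos: "\<forall>e\<in>E. w e > 0"
    and v1: "v1 \<in> hLap E w h1" and v2: "v2 \<in> hLap E w h2"
  shows "0 \<le> (v1 - v2) \<bullet> (h1 - h2)"
proof -
  obtain b1 where b1: "v1 = (\<Sum>e\<in>E. (w e * (b1 e \<bullet> h1)) *\<^sub>R b1 e)"
    "\<forall>e\<in>E. b1 e \<in> Bset e \<and> (\<forall>c\<in>Bset e. c \<bullet> h1 \<le> b1 e \<bullet> h1)" using v1 unfolding hLap_def by blast
  obtain b2 where b2: "v2 = (\<Sum>e\<in>E. (w e * (b2 e \<bullet> h2)) *\<^sub>R b2 e)"
    "\<forall>e\<in>E. b2 e \<in> Bset e \<and> (\<forall>c\<in>Bset e. c \<bullet> h2 \<le> b2 e \<bullet> h2)" using v2 unfolding hLap_def by blast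
  have eq: "(v1 - v2) \<bullet> (h1 - h2) = (\<Sum>e\<in>E. w e * ((b1 e \<bullet> h1) * (b1 e \<bullet> h1) - (b1 e \<bullet> h1) * (b1 e \<bullet> h2)
        - (b2 e \<bullet> h2) * (b2 e \<bullet> h1) + (b2 e \<bullet> h2) * (b2 e \<bullet> h2)))"
  proof -
    have s: "\<And>b c h. (\<Sum>e\<in>E. c e *\<^sub>R b e) \<bullet> h = (\<Sum>e\<in>E. c e * (b e \<bullet> h))"
      by (simp add: inner_sum_left)
    have "(v1 - v2) \<bullet> (h1 - h2) = v1 \<bullet> h1 - v1 \<bullet> h2 - v2 \<bullet> h1 + v2 \<bullet> h2"
      by (simp add: inner_diff_left inner_diff_right)
    also have "\<dots> = (\<Sum>e\<in>E. w e * (b1 e \<bullet> h1) * (b1 e \<bullet> h1)) - (\<Sum>e\<in>E. w e * (b1 e \<bullet> h1) * (b1 e \<bullet> h2))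
        - (\<Sum>e\<in>E. w e * (b2 e \<bullet> h2) * (b2 e \<bullet> h1)) + (\<Sum>e\<in>E. w e * (b2 e \<bullet> h2) * (b2 e \<bullet> h2))"
      unfolding b1(1) b2(1) s by simp
    also have "\<dots> = (\<Sum>e\<in>E. w e * (b1 e \<bullet> h1) * (b1 e \<bullet> h1) - w e * (b1 e \<bullet> h1) * (b1 e \<bullet> h2)
        - w e * (b2 e \<bullet> h2) * (b2 e \<bullet> h1) + w e * (b2 e \<bullet> h2) * (b2 e \<bullet> h2))"
      by (simp only: sum.distrib sum_subtractf)
    also have "\<dots> = (\<Sum>e\<in>E. w e * ((b1 e \<bullet> h1) * (b1 e \<bullet> h1) - (b1 e \<bullet> h1) * (b1 e \<bullet> h2)
        - (b2 e \<bullet> h2) * (b2 e \<bullet> h1) + (b2 e \<bullet> h2) * (b2 e \<bullet> h2)))"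
      by (intro sum.cong refl) (simp add: right_diff_distrib distrib_left mult.assoc)
    finally show ?thesis .
  qed
  show ?thesis unfolding eq
  proof (intro sum_nonneg mult_nonneg_nonneg)
    fix e assume e: "e \<in> E"
    show "0 \<le> w e" using wpos e by (auto intro: less_imp_le)
    define m1 where "m1 = b1 e \<bullet> h1"
    define m2 where "m2 = b2 e \<bullet> h2"
    have B1: "b1 e \<in> Bset e" "\<forall>c\<in>Bset e. c \<bullet> h1 \<le> b1 e \<bullet> h1" using b1(2) e by auto
    have B2: "b2 e \<in> Bset e" "\<forall>c\<in>Bset e. c \<bullet> h2 \<le> b2 e \<bullet> h2" using b2(2) e by auto
    have z: "0 \<in> Bset e" using Bset_zero ne e by auto
    have m1: "0 \<le> m1" "b2 e \<bullet> h1 \<le> m1"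
      using B1(2)[rule_format, OF z] B1(2)[rule_format, OF B2(1)] unfolding m1_def by auto
    have m2: "0 \<le> m2" "b1 e \<bullet> h2 \<le> m2"
      using B2(2)[rule_format, OF z] B2(2)[rule_format, OF B1(1)] unfolding m2_def by auto
    have "m1 * (b1 e \<bullet> h2) \<le> m1 * m2" using m1 m2 by (intro mult_left_mono) auto
    moreover have "m2 * (b2 e \<bullet> h1) \<le> m2 * m1" using m1 m2 by (intro mult_left_mono) auto
    moreover have "0 \<le> (m1 - m2)^2" by simp
    ultimately show "0 \<le> m1 * m1 - m1 * (b1 e \<bullet> h2) - m2 * (b2 e \<bullet> h1) + m2 * m2"
      unfolding m1_def[symmetric] m2_def[symmetric] by (simp add: power2_eq_square algebra_simps)
  qed
qed

lemma resolv_unique: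
  fixes E :: "('a::finite) set set" and f :: "real^'a"
  assumes ne: "\<forall>e\<in>E. e \<noteq> {}" and wpos: "\<forall>e\<in>E. w e > 0" and dpos: "\<forall>x. hdeg E w x > 0" and lam: "lam > 0"
    and g1: "(1/lam) *\<^sub>R (f - g1) \<in> nLap E w g1" and g2: "(1/lam) *\<^sub>R (f - g2) \<in> nLap E w g2"
  shows "g1 = g2"
proof -
  let ?d = "hdeg E w"
  have "0 \<le> ((1/lam) *\<^sub>R (f - g1) - (1/lam) *\<^sub>R (f - g2)) \<bullet> ((\<chi> x. g1$x / ?d x) - (\<chi> x. g2$x / ?d x))"
    using hLap_mono[OF ne wpos g1[unfolded nLap_def] g2[unfolded nLap_def]] .
  also have "\<dots> = - (1/lam) * (\<Sum>z\<in>UNIV. (g1$z - g2$z)^2 / ?d z)"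
  proof -
    have v: "(1/lam) *\<^sub>R (f - g1) - (1/lam) *\<^sub>R (f - g2) = (1/lam) *\<^sub>R (g2 - g1)"
      by (simp add: algebra_simps)
    have "(1/lam) * (g2$z - g1$z) * (g1$z / ?d z - g2$z / ?d z) = - (1/lam) * ((g1$z - g2$z)^2 / ?d z)" for z
    proof -
      have "?d z \<noteq> 0" using dpos[rule_format, of z] by simp
      have "g1$z / ?d z - g2$z / ?d z = (g1$z - g2$z) / ?d z" by (simp add: diff_divide_distrib)
      moreover have "(g2$z - g1$z) * ((g1$z - g2$z) / ?d z) = - ((g1$z - g2$z)^2 / ?d z)"
        by (metis minus_diff_eq minus_divide_left mult_minus_left power2_eq_square times_divide_eq_right)
      ultimately show ?thesis by (simp only: mult.assoc mult_minus_left mult_minus_right)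
    qed
    then show ?thesis unfolding v inner_vec_def
      by (simp add: sum_distrib_left mult.assoc)
  qed
  finally have "(\<Sum>z\<in>UNIV. (g1$z - g2$z)^2 / ?d z) \<le> 0"
    using lam by (simp add: divide_le_0_iff)
  moreover have "\<forall>z\<in>UNIV. 0 \<le> (g1$z - g2$z)^2 / ?d z" using dpos by (auto intro: divide_nonneg_pos)
  ultimately have "\<forall>z\<in>UNIV. (g1$z - g2$z)^2 / ?d z = 0"
    using sum_nonneg_eq_0_iff[of UNIV "\<lambda>z. (g1$z - g2$z)^2 / ?d z"] by (simp add: antisym sum_nonneg)
  then show ?thesis using dpos by (auto simp: vec_eq_iff) (metis less_irrefl)
qed

lemma resolv_spec:
  fixes E :: "('a::finite) set set" and f :: "real^'a"
  assumes ne: "\<forall>e\<in>E. e \<noteq> {}" and wpos: "\<forall>e\<in>E. w e > 0" and dpos: "\<forall>x. hdeg E w x > 0" and lam: "lam > 0"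
  shows "(1/lam) *\<^sub>R (f - resolv E w lam f) \<in> nLap E w (resolv E w lam f)"
proof -
  have ex: "\<exists>!g. (1/lam) *\<^sub>R (f - g) \<in> nLap E w g"
    by (rule ex_ex1I[OF resolv_exists[OF assms] resolv_unique[OF assms]])
  show ?thesis unfolding resolv_def by (rule theI'[OF ex])
qed



lemma hdeg_sum: "finite E \<Longrightarrow> hdeg E w z = (\<Sum>e\<in>E. w e * (if z \<in> e then 1 else 0))"
  unfolding hdeg_def by (simp add: sum.inter_filter[symmetric] if_distrib cong: if_cong)

lemma resolv_bound:
  fixes E :: "('a::finite) set set" and f :: "real^'a"
  assumes ne: "\<forall>e\<in>E. e \<noteq> {}" and wpos: "\<forall>e\<in>E. w e > 0" and dpos: "\<forall>x. hdeg E w x > 0"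
    and hc: "hconnected E" and lam: "0 < lam" "lam < 1/2" and lip: "wLip1 E w f"
  shows "\<bar>((1/lam) *\<^sub>R (f - resolv E w lam f))$z\<bar> \<le> hdeg E w z / (1 - 2*lam)"
proof -
  let ?d = "hdeg E w"
  define g where "g = resolv E w lam f"
  define v where "v = (1/lam) *\<^sub>R (f - g)"
  define h where "h = (\<chi> x. g$x / ?d x)"
  have "v \<in> nLap E w g" unfolding v_def g_def using resolv_spec[OF ne wpos dpos lam(1)] .
  then obtain b where b: "v = (\<Sum>e\<in>E. (w e * (b e \<bullet> h)) *\<^sub>R b e)"
    "\<forall>e\<in>E. b e \<in> Bset e \<and> (\<forall>c\<in>Bset e. c \<bullet> h \<le> b e \<bullet> h)"
    unfolding nLap_mem h_def by blast
  have gz: "g$z = f$z - lam * v$z" for z unfolding v_def using lam by simp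
  define V where "V = Max (range (\<lambda>z. \<bar>v$z\<bar> / ?d z))"
  have Vge: "\<bar>v$z\<bar> / ?d z \<le> V" for z unfolding V_def by (rule Max_ge) auto
  have "V \<in> range (\<lambda>z. \<bar>v$z\<bar> / ?d z)" unfolding V_def by (rule Max_in) auto
  then obtain z0 where z0: "V = \<bar>v$z0\<bar> / ?d z0" by auto
  have osc_bd: "osc e h \<le> 1 + 2 * lam * V" if e: "e \<in> E" for e
  proof (rule osc_le)
    show "e \<noteq> {}" using ne e by auto
    fix a c assume ac: "a \<in> e" "c \<in> e"
    have "f$a / ?d a - f$c / ?d c \<le> real (hdist E a c)" using lip unfolding wLip1_def by (meson abs_le_D1)
    also have "\<dots> \<le> 1" using hdist_edge[OF e ac] by simp
    finally have 1: "f$a / ?d a - f$c / ?d c \<le> 1" .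
    have 2: "h$a - h$c = (f$a / ?d a - f$c / ?d c) - lam * (v$a / ?d a - v$c / ?d c)"
      unfolding h_def by (simp add: gz diff_divide_distrib algebra_simps)
    have "v$c / ?d c \<le> \<bar>v$c\<bar> / ?d c" using dpos[rule_format, of c] by (intro divide_right_mono) auto
    moreover have "(- v$a) / ?d a \<le> \<bar>v$a\<bar> / ?d a" using dpos[rule_format, of a] by (intro divide_right_mono) auto
    ultimately have "- (v$a / ?d a - v$c / ?d c) \<le> \<bar>v$a\<bar> / ?d a + \<bar>v$c\<bar> / ?d c" by simp
    also have "\<dots> \<le> 2 * V" using Vge[of a] Vge[of c] by simp
    finally have "- lam * (v$a / ?d a - v$c / ?d c) \<le> lam * (2 * V)"
      using lam by (metis mult_left_mono less_imp_le mult_minus_left mult_minus_right)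
    then show "h$a - h$c \<le> 1 + 2 * lam * V" using 1 2 by simp
  qed
  have vz: "\<bar>v$z\<bar> \<le> (1 + 2 * lam * V) * ?d z" for z
  proof -
    have "\<bar>v$z\<bar> = \<bar>\<Sum>e\<in>E. w e * (b e \<bullet> h) * (b e $ z)\<bar>" unfolding b(1) by simp
    also have "\<dots> \<le> (\<Sum>e\<in>E. \<bar>w e * (b e \<bullet> h) * (b e $ z)\<bar>)" by (rule sum_abs)
    also have "\<dots> \<le> (\<Sum>e\<in>E. w e * ((1 + 2 * lam * V) * (if z \<in> e then 1 else 0)))"
    proof (rule sum_mono)
      fix e assume e: "e \<in> E"
      have bh0: "0 \<le> b e \<bullet> h" using b(2) e Bset_zero[of e] ne by force
      have bh1: "b e \<bullet> h \<le> 1 + 2 * lam * V" using Bset_osc[of "b e" e h] b(2) e osc_bd[OF e] by force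
      have bz: "\<bar>b e $ z\<bar> \<le> (if z \<in> e then 1 else 0)" using Bset_comp b(2) e by blast
      have "\<bar>w e * (b e \<bullet> h) * (b e $ z)\<bar> = w e * ((b e \<bullet> h) * \<bar>b e $ z\<bar>)"
        using wpos e bh0 by (simp add: abs_mult less_imp_le)
      also have "\<dots> \<le> w e * ((1 + 2 * lam * V) * (if z \<in> e then 1 else 0))"
        using wpos e bh0 bh1 bz by (intro mult_left_mono mult_mono) auto
      finally show "\<bar>w e * (b e \<bullet> h) * (b e $ z)\<bar> \<le> w e * ((1 + 2 * lam * V) * (if z \<in> e then 1 else 0))" .
    qed
    also have "\<dots> = (1 + 2 * lam * V) * ?d z"
      by (simp add: hdeg_sum sum_distrib_left algebra_simps)
    finally show ?thesis .
  qed
  have "V \<le> 1 + 2 * lam * V"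
    using vz[of z0] dpos[rule_format, of z0] unfolding z0 by (simp add: divide_le_eq)
  then have "V * (1 - 2 * lam) \<le> 1" by (simp add: algebra_simps)
  then have VV: "V \<le> 1 / (1 - 2 * lam)" using lam by (simp add: le_divide_eq)
  have "\<bar>v$z\<bar> \<le> ?d z * V" using Vge[of z] dpos[rule_format, of z] by (simp add: divide_le_eq mult.commute)
  also have "\<dots> \<le> ?d z * (1 / (1 - 2 * lam))" using VV dpos[rule_format, of z] by (intro mult_left_mono) auto
  finally show ?thesis unfolding v_def g_def by simp
qed

lemma winner_axis:
  fixes E :: "('a::finite) set set"
  assumes "x \<noteq> y"
  shows "winner E w g (axis x 1 - axis y 1) = g$x / hdeg E w x - g$y / hdeg E w y"
proof -
  have "winner E w g (axis x 1 - axis y 1) =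
      (\<Sum>z\<in>UNIV. (if z = x then g$x / hdeg E w x else 0)) - (\<Sum>z\<in>UNIV. (if z = y then g$y / hdeg E w y else 0))"
    unfolding winner_def sum_subtractf[symmetric]
    by (intro sum.cong refl) (auto simp: axis_def)
  then show ?thesis by simp
qed



theorem mainTheorem16:
  fixes E :: "('a::finite) set set" and w :: "'a set \<Rightarrow> real" and \<kappa>0 :: real
  assumes "\<forall>e\<in>E. e \<noteq> {}"
    and "\<forall>e\<in>E. w e > 0"
    and "hconnected E"
    and "\<forall>x. hdeg E w x > 0"
    and "CARD('a) \<ge> 2"
    and "\<kappa>0 > 0"
    and "\<forall>x y. x \<noteq> y \<longrightarrow> kappa_bar E w x y \<ge> ereal \<kappa>0"
  shows "real (hdiam E) \<le> 2 / \<kappa>0"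
proof -
  note ne = assms(1) and wpos = assms(2) and hc = assms(3) and dpos = assms(4)
  let ?d = "hdeg E w"
  have "hdiam E \<in> {hdist E x y | x y. True}"
  proof -
    have "{hdist E x y | x y. True} = (\<lambda>(x,y). hdist E x y) ` UNIV" by auto
    then have "finite {hdist E x y | x y. True}" by simp
    then show ?thesis unfolding hdiam_def by (intro Max_in) auto
  qed
  then obtain x y where xy: "hdiam E = hdist E x y" by auto
  define D where "D = real (hdist E x y)"
  show ?thesis
  proof (cases "x = y")
    case True then show ?thesis using xy assms(6) by simp
  next
    case False
    show ?thesis
    proof (cases "D = 0")
      case True then show ?thesis using xy assms(6) D_def by simp
    next
      case Dn: False
      then have Dpos: "D > 0" unfolding D_def by simp
      have key: "kappa E w lam x y / lam \<le> 2 / ((1 - 2 * lam) * D)" if lam: "0 < lam" "lam < 1/2" for lam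
      proof -
        define C where "C = 2 * lam / (1 - 2 * lam)"
        let ?F = "\<lambda>f. winner E w (resolv E w lam f) (axis x 1 - axis y 1)"
        have wf: "?F f = (f$x / ?d x - f$y / ?d y) - lam * (v$x / ?d x - v$y / ?d y)"
          if "v = (1/lam) *\<^sub>R (f - resolv E w lam f)" for f v
        proof -
          have r: "resolv E w lam f = f - lam *\<^sub>R v" using that lam by simp
          show ?thesis unfolding winner_axis[OF False] r
            by (simp add: diff_divide_distrib algebra_simps)
        qed
        have vb: "\<bar>lam * (v$x / ?d x - v$y / ?d y)\<bar> \<le> C"
          if "v = (1/lam) *\<^sub>R (f - resolv E w lam f)" "wLip1 E w f" for f v
        proof -
          have bx: "\<bar>v$x\<bar> \<le> ?d x / (1 - 2*lam)" "\<bar>v$y\<bar> \<le> ?d y / (1 - 2*lam)"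
            using resolv_bound[OF ne wpos dpos hc lam that(2)] that(1) by auto
          have "\<bar>v$x / ?d x\<bar> \<le> 1 / (1 - 2*lam)" "\<bar>v$y / ?d y\<bar> \<le> 1 / (1 - 2*lam)"
            using bx dpos[rule_format, of x] dpos[rule_format, of y]
            by (simp_all add: abs_divide divide_le_eq field_simps)
          then have "\<bar>v$x / ?d x - v$y / ?d y\<bar> \<le> 2 / (1 - 2*lam)" by linarith
          then have "lam * \<bar>v$x / ?d x - v$y / ?d y\<bar> \<le> lam * (2 / (1 - 2*lam))"
            using lam by (intro mult_left_mono) auto
          then show ?thesis using lam unfolding C_def by (simp add: abs_mult mult.commute)
        qed
        have bdd: "bdd_above (?F ` {f. wLip1 E w f})"
        proof (rule bdd_aboveI2)
          fix f assume "f \<in> {f. wLip1 E w f}"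
          then have lf: "wLip1 E w f" by simp
          define v where "v = (1/lam) *\<^sub>R (f - resolv E w lam f)"
          have "f$x / ?d x - f$y / ?d y \<le> D" using lf unfolding wLip1_def D_def by (meson abs_le_D1)
          then show "?F f \<le> D + C" using wf[OF v_def] vb[OF v_def lf] by linarith
        qed
        define f0 where "f0 = (\<chi> z. - (?d z * real (hdist E x z)))"
        have f0d: "f0$z / ?d z = - real (hdist E x z)" for z
          unfolding f0_def using dpos[rule_format, of z] by simp
        have lf0: "wLip1 E w f0" unfolding wLip1_def f0d
        proof (intro allI)
          fix a b
          have "hdist E x b \<le> hdist E x a + hdist E a b" "hdist E x a \<le> hdist E x b + hdist E a b"
            using hdist_tri[OF hc] hdist_sym[OF hc] by metis+
          then show "\<bar>- real (hdist E x a) - - real (hdist E x b)\<bar> \<le> real (hdist E a b)" by linarith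
        qed
        define v0 where "v0 = (1/lam) *\<^sub>R (f0 - resolv E w lam f0)"
        have "?F f0 \<ge> D - C"
          using wf[OF v0_def] vb[OF v0_def lf0] f0d[of x] f0d[of y] unfolding D_def by simp
        moreover have "?F f0 \<le> KD E w lam x y" unfolding KD_def
          by (rule cSup_upper[OF _ bdd]) (use lf0 in auto)
        ultimately have KD: "KD E w lam x y \<ge> D - C" by linarith
        have "kappa E w lam x y \<le> C / D"
        proof -
          have "(D - C) / D \<le> KD E w lam x y / D" using KD Dpos by (intro divide_right_mono) auto
          moreover have "(D - C) / D = 1 - C / D" using Dpos by (simp add: diff_divide_distrib)
          ultimately show ?thesis unfolding kappa_def D_def[symmetric] by linarith
        qed
        then have "kappa E w lam x y / lam \<le> (C / D) / lam" using lam by (intro divide_right_mono) auto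
        also have "\<dots> = 2 / ((1 - 2 * lam) * D)" unfolding C_def using lam Dpos by (simp add: field_simps)
        finally show ?thesis .
      qed
      have "kappa_bar E w x y \<le> Limsup (at_right 0) (\<lambda>lam. ereal (2 / ((1 - 2 * lam) * D)))"
        unfolding kappa_bar_def
      proof (rule Limsup_mono)
        have "eventually (\<lambda>lam::real. lam < 1/2) (at_right 0)"
          by (rule order_tendstoD(2)[OF tendsto_ident_at]) simp
        then show "\<forall>\<^sub>F lam in at_right 0. ereal (kappa E w lam x y / lam) \<le> ereal (2 / ((1 - 2 * lam) * D))"
          using eventually_at_right_less[of "0::real"]
          by eventually_elim (use key in auto)
      qed
      also have "\<dots> = ereal (2 / ((1 - 2 * 0) * D))"
      proof (rule lim_imp_Limsup)
        show "\<not> trivial_limit (at_right (0::real))" by simp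
        have "((\<lambda>lam::real. 2 / ((1 - 2 * lam) * D)) \<longlongrightarrow> 2 / ((1 - 2 * 0) * D)) (at_right 0)"
          using Dpos by (intro tendsto_intros) auto
        then show "((\<lambda>lam. ereal (2 / ((1 - 2 * lam) * D))) \<longlongrightarrow> ereal (2 / ((1 - 2 * 0) * D))) (at_right 0)"
          by (rule tendsto_ereal)
      qed
      finally have "ereal \<kappa>0 \<le> ereal (2 / D)" using assms(7) False by (metis mult_1 order_trans diff_zero mult_zero_right)
      then have "\<kappa>0 \<le> 2 / D" by simp
      then have "D \<le> 2 / \<kappa>0" using Dpos assms(6) by (simp add: field_simps)
      then show ?thesis using xy D_def by simp
    qed
  qed
qed


end
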